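(* Let $\gamma\in(0,1)$. There is a constant $c_3>0$, a polynomial in $\|D_x\|_\infty,\|D_u\|_\infty,\kappa,\gamma^{-1},\bar w$ (independent of $n,m,H,t$), such that with $\epsilon_3(H)=c_3\sqrt n(1-\gamma)^H$ the following holds. For any $K\in\mathcal K$, the disturbance-action parameter $\bm M(K)=(M^{[1]}(K),\dots,M^{[H]}(K))$ defined by $M^{[i]}(K)=(\mathbb K-K)(A-BK)^{i-1}$ belongs to $\mathcal M$, and for all $t$ and all disturbance sequences in $\mathcal W$, $$\max\big(\|D_x[x_t^K-x_t^{\bm M(K)}]\|_\infty,\ \|D_u[u_t^K-u_t^{\bm M(K)}]\|_\infty\big)\le\epsilon_3(H),$$ where $(x_t^K,u_t^K)$ is produced by the controller $u_t=-Kx_t$ and $(x_t^{\bm M(K)},u_t^{\bm M(K)})$ by the disturbance-action policy with constant parameter $\bm M(K)$, under the same disturbances. Hence $\bm M(K)$ is $\epsilon_3(H)$-loosely safe.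
   Context: System $x_{t+1}=Ax_t+Bu_t+w_t$, $A\in\mathbb R^{n\times n}$, $B\in\mathbb R^{n\times m}$, $x_0=0$, $t=0,\dots,T$; $\mathcal W=\{w:\|w\|_\infty\le\bar w\}$, $\bar w>0$. $\mathcal X=\{x:D_xx\le d_x\}$, $\mathcal U=\{u:D_uu\le d_u\}$ with $D_x\in\mathbb R^{k_x\times n}$, $D_u\in\mathbb R^{k_u\times m}$ (entrywise inequalities; $\mathds1$ all-ones vector; matrix $\|\cdot\|_\infty$ = max absolute row sum, $\|\cdot\|_2$ spectral norm). $K$ is $(\kappa,\gamma)$-strongly stable ($\kappa\ge1$) if $A-BK=Q^{-1}LQ$ with $\|L\|_2\le1-\gamma$, $\max(\|Q\|_2,\|Q^{-1}\|_2,\|K\|_2)\le\kappa$. A controller is safe if $x_t\in\mathcal X$, $u_t\in\mathcal U$ for all $0\le t\le T$ and all disturbance sequences in $\mathcal W$, and $\epsilon$-loosely safe if $D_xx_t\le d_x+\epsilon\mathds1$ and $D_uu_t\le d_u+\epsilon\mathds1$ for all such $t$ and disturbances. $\mathcal K$ = set of $K$ such that $u_t=-Kx_t$ is safe and $K$ is $(\kappa,\gamma)$-strongly stable. Fix a $(\kappa,\gamma)$-strongly stable $\mathbb K$. Disturbance-action policy with parameter $\bm M=(M^{[1]},\dots,M^{[H]})$: $u_t=-\mathbb Kx_t+\sum_{i=1}^HM^{[i]}w_{t-i}$ with $w_s=0$ for $s<0$. $\mathcal M=\{\bm M:\|M^{[i]}\|_\infty\le2\sqrt n\kappa^3(1-\gamma)^{i-1},\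 1\le i\le H\}$. *)

theory Defs
  imports Complex_Main "Jordan_Normal_Form.Matrix"
begin

(* Vectors/matrices are Jordan_Normal_Form 'real vec' / 'real mat' with explicit dimensions,
   so that the dimensions n, m, k_x, k_u can be quantified inside the statement. *)

definition vnorm_inf :: "real vec \<Rightarrow> real" where
  "vnorm_inf v = Max (insert 0 {\<bar>v $ i\<bar> | i. i < dim_vec v})"

definition vnorm2 :: "real vec \<Rightarrow> real" where
  "vnorm2 v = sqrt (\<Sum>i<dim_vec v. (v $ i)^2)"

definition mnorm_inf :: "real mat \<Rightarrow> real" where
  "mnorm_inf M = Max (insert 0 {(\<Sum>j<dim_col M. \<bar>M $$ (i, j)\<bar>) | i. i < dim_row M})"

definition mnorm2 :: "real mat \<Rightarrow> real" where
  "mnorm2 M = Sup {vnorm2 (M *\<^sub>v x) | x. x \<in> carrier_vec (dim_col M) \<and> vnorm2 x \<le> 1}"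

definition vec_le :: "real vec \<Rightarrow> real vec \<Rightarrow> bool" where
  "vec_le v w \<longleftrightarrow> dim_vec v = dim_vec w \<and> (\<forall>i < dim_vec v. v $ i \<le> w $ i)"

definition vec_shift :: "real vec \<Rightarrow> real \<Rightarrow> real vec" where
  "vec_shift d e = vec (dim_vec d) (\<lambda>i. d $ i + e)"

definition strongly_stable :: "real \<Rightarrow> real \<Rightarrow> real mat \<Rightarrow> real mat \<Rightarrow> real mat \<Rightarrow> bool" where
  "strongly_stable \<kappa> \<gamma> A B K \<longleftrightarrow>
     (\<exists>Q Qi L. Q \<in> carrier_mat (dim_row A) (dim_row A) \<and> Qi \<in> carrier_mat (dim_row A) (dim_row A)
        \<and> L \<in> carrier_mat (dim_row A) (dim_row A)
        \<and> Q * Qi = 1\<^sub>m (dim_row A) \<and> Qi * Q = 1\<^sub>m (dim_row A)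
        \<and> A - B * K = Qi * L * Q
        \<and> mnorm2 L \<le> 1 - \<gamma>
        \<and> mnorm2 Q \<le> \<kappa> \<and> mnorm2 Qi \<le> \<kappa> \<and> mnorm2 K \<le> \<kappa>)"

definition admissible_dist :: "nat \<Rightarrow> real \<Rightarrow> (nat \<Rightarrow> real vec) \<Rightarrow> bool" where
  "admissible_dist n wbar w \<longleftrightarrow> (\<forall>t. w t \<in> carrier_vec n \<and> vnorm_inf (w t) \<le> wbar)"

fun lin_state :: "real mat \<Rightarrow> real mat \<Rightarrow> real mat \<Rightarrow> (nat \<Rightarrow> real vec) \<Rightarrow> nat \<Rightarrow> real vec" where
  "lin_state A B K w 0 = 0\<^sub>v (dim_row A)"
| "lin_state A B K w (Suc t) =
     A *\<^sub>v lin_state A B K w t + B *\<^sub>v (- (K *\<^sub>v lin_state A B K w t)) + w t"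

definition lin_input :: "real mat \<Rightarrow> real mat \<Rightarrow> real mat \<Rightarrow> (nat \<Rightarrow> real vec) \<Rightarrow> nat \<Rightarrow> real vec" where
  "lin_input A B K w t = - (K *\<^sub>v lin_state A B K w t)"

(* disturbance-action input: u = -Kb x + \<Sum>_{i=1}^H M^[i] w_{t-i}, with w_s = 0 for s < 0 *)
definition dap_u :: "real mat \<Rightarrow> (nat \<Rightarrow> real mat) \<Rightarrow> nat \<Rightarrow> (nat \<Rightarrow> real vec) \<Rightarrow> nat \<Rightarrow> real vec \<Rightarrow> real vec" where
  "dap_u Kb M H w t x =
     vec (dim_row Kb) (\<lambda>j. (- (Kb *\<^sub>v x)) $ j + (\<Sum>i\<in>{1..H}. if i \<le> t then (M i *\<^sub>v w (t - i)) $ j else 0))"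

fun dap_state :: "real mat \<Rightarrow> real mat \<Rightarrow> real mat \<Rightarrow> (nat \<Rightarrow> real mat) \<Rightarrow> nat \<Rightarrow> (nat \<Rightarrow> real vec) \<Rightarrow> nat \<Rightarrow> real vec" where
  "dap_state A B Kb M H w 0 = 0\<^sub>v (dim_row A)"
| "dap_state A B Kb M H w (Suc t) =
     A *\<^sub>v dap_state A B Kb M H w t + B *\<^sub>v dap_u Kb M H w t (dap_state A B Kb M H w t) + w t"

definition dap_input :: "real mat \<Rightarrow> real mat \<Rightarrow> real mat \<Rightarrow> (nat \<Rightarrow> real mat) \<Rightarrow> nat \<Rightarrow> (nat \<Rightarrow> real vec) \<Rightarrow> nat \<Rightarrow> real vec" where
  "dap_input A B Kb M H w t = dap_u Kb M H w t (dap_state A B Kb M H w t)"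

definition lin_safe :: "nat \<Rightarrow> real \<Rightarrow> real mat \<Rightarrow> real vec \<Rightarrow> real mat \<Rightarrow> real vec
      \<Rightarrow> real mat \<Rightarrow> real mat \<Rightarrow> real mat \<Rightarrow> bool" where
  "lin_safe T wbar Dx dx Du du A B K \<longleftrightarrow>
     (\<forall>w. admissible_dist (dim_row A) wbar w \<longrightarrow> (\<forall>t\<le>T.
        vec_le (Dx *\<^sub>v lin_state A B K w t) dx \<and> vec_le (Du *\<^sub>v lin_input A B K w t) du))"

definition dap_loosely_safe :: "real \<Rightarrow> nat \<Rightarrow> real \<Rightarrow> real mat \<Rightarrow> real vec \<Rightarrow> real mat \<Rightarrow> real vec
      \<Rightarrow> real mat \<Rightarrow> real mat \<Rightarrow> real mat \<Rightarrow> (nat \<Rightarrow> real mat) \<Rightarrow> nat \<Rightarrow> bool" where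
  "dap_loosely_safe \<epsilon> T wbar Dx dx Du du A B Kb M H \<longleftrightarrow>
     (\<forall>w. admissible_dist (dim_row A) wbar w \<longrightarrow> (\<forall>t\<le>T.
        vec_le (Dx *\<^sub>v dap_state A B Kb M H w t) (vec_shift dx \<epsilon>)
      \<and> vec_le (Du *\<^sub>v dap_input A B Kb M H w t) (vec_shift du \<epsilon>)))"

definition in_M :: "nat \<Rightarrow> nat \<Rightarrow> real \<Rightarrow> real \<Rightarrow> nat \<Rightarrow> (nat \<Rightarrow> real mat) \<Rightarrow> bool" where
  "in_M n m \<kappa> \<gamma> H M \<longleftrightarrow>
     (\<forall>i\<in>{1..H}. M i \<in> carrier_mat m n \<and> mnorm_inf (M i) \<le> 2 * sqrt n * \<kappa>^3 * (1 - \<gamma>)^(i - 1))"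

definition M_of_K :: "real mat \<Rightarrow> real mat \<Rightarrow> real mat \<Rightarrow> real mat \<Rightarrow> nat \<Rightarrow> real mat" where
  "M_of_K A B Kb K i = (Kb - K) * ((A - B * K) ^\<^sub>m (i - 1))"

end

theory Submission
  imports Defs "HOL-Analysis.L2_Norm"
begin

lemma vnorm2_L2: "vnorm2 v = L2_set (\<lambda>i. v $ i) {..<dim_vec v}"
  unfolding vnorm2_def L2_set_def by simp

lemma vnorm2_nonneg[simp]: "0 \<le> vnorm2 v"
  unfolding vnorm2_def by (simp add: sum_nonneg)

lemma vnorm2_add: assumes "dim_vec a = dim_vec b" shows "vnorm2 (a + b) \<le> vnorm2 a + vnorm2 b"
proof -
  have "vnorm2 (a + b) = L2_set (\<lambda>i. a $ i + b $ i) {..<dim_vec b}"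
    unfolding vnorm2_L2 using assms by (intro L2_set_cong) auto
  also have "\<dots> \<le> vnorm2 a + vnorm2 b" unfolding vnorm2_L2 using assms
    by (metis L2_set_triangle_ineq)
  finally show ?thesis .
qed

lemma vnorm2_uminus[simp]: "vnorm2 (- a) = vnorm2 a"
  unfolding vnorm2_def by simp

lemma vnorm2_diff: assumes "dim_vec a = dim_vec b" shows "vnorm2 (a - b) \<le> vnorm2 a + vnorm2 b"
proof -
  have "a - b = a + (- b)" using assms by (intro eq_vecI) auto
  then show ?thesis using vnorm2_add[of a "- b"] assms by simp
qed

lemma vnorm2_smult: "vnorm2 (c \<cdot>\<^sub>v v) = \<bar>c\<bar> * vnorm2 v"
proof -
  have "vnorm2 (c \<cdot>\<^sub>v v) = L2_set (\<lambda>i. \<bar>c\<bar> * \<bar>v $ i\<bar>) {..<dim_vec v}"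
    unfolding vnorm2_def L2_set_def by (simp add: power_mult_distrib)
  also have "\<dots> = \<bar>c\<bar> * L2_set (\<lambda>i. \<bar>v $ i\<bar>) {..<dim_vec v}"
    by (simp add: L2_set_right_distrib)
  also have "\<dots> = \<bar>c\<bar> * vnorm2 v" unfolding vnorm2_def L2_set_def by simp
  finally show ?thesis .
qed

lemma comp_le_vnorm2: "i < dim_vec v \<Longrightarrow> \<bar>v $ i\<bar> \<le> vnorm2 v"
  unfolding vnorm2_L2 using member_le_L2_set[of "{..<dim_vec v}" i "\<lambda>i. \<bar>v $ i\<bar>"]
  by (simp add: L2_set_def)

lemma vnorm2_zero: assumes "vnorm2 v = 0" shows "v = 0\<^sub>v (dim_vec v)"
proof (intro eq_vecI)
  fix i assume "i < dim_vec (0\<^sub>v (dim_vec v))"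
  then show "v $ i = 0\<^sub>v (dim_vec v) $ i" using comp_le_vnorm2[of i v] assms by auto
qed simp

lemma vnorm2_0[simp]: "vnorm2 (0\<^sub>v n) = 0"
  unfolding vnorm2_def by simp

lemma vnorm2_le_sqrt: assumes "\<And>i. i < dim_vec v \<Longrightarrow> \<bar>v $ i\<bar> \<le> b"
  shows "vnorm2 v \<le> sqrt (dim_vec v) * b"
proof -
  have b: "0 \<le> b" if "dim_vec v \<noteq> 0" using assms[of 0] that by fastforce
  have "(v $ i)^2 \<le> b^2" if "i < dim_vec v" for i
  proof -
    have "\<bar>v $ i\<bar> \<le> b" using assms that .
    then have "\<bar>v $ i\<bar>^2 \<le> b^2" by (intro power_mono) auto
    then show ?thesis by simp
  qed
  then have "(\<Sum>i<dim_vec v. (v $ i)^2) \<le> (\<Sum>i<dim_vec v. b^2)"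
    by (intro sum_mono) auto
  then have "vnorm2 v \<le> sqrt (dim_vec v * b^2)" unfolding vnorm2_def by simp
  also have "\<dots> = sqrt (dim_vec v) * b"
  proof (cases "dim_vec v = 0")
    case False
    then have "0 \<le> b" using b by blast
    then show ?thesis by (simp add: real_sqrt_mult)
  qed simp
  finally show ?thesis .
qed

lemma comp_le_vnorm_inf: "i < dim_vec v \<Longrightarrow> \<bar>v $ i\<bar> \<le> vnorm_inf v"
  unfolding vnorm_inf_def by (intro Max_ge) auto

lemma vnorm_inf_nonneg[simp]: "0 \<le> vnorm_inf v"
  unfolding vnorm_inf_def by (intro Max_ge) auto

lemma vnorm_inf_le: assumes "\<And>i. i < dim_vec v \<Longrightarrow> \<bar>v $ i\<bar> \<le> b" "0 \<le> b"
  shows "vnorm_inf v \<le> b"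
  unfolding vnorm_inf_def using assms by (intro Max.boundedI) auto

lemma vnorm_inf_le_vnorm2: "vnorm_inf v \<le> vnorm2 v"
  by (intro vnorm_inf_le comp_le_vnorm2) auto

lemma rowsum_le_mnorm_inf: "i < dim_row M \<Longrightarrow> (\<Sum>j<dim_col M. \<bar>M $$ (i, j)\<bar>) \<le> mnorm_inf M"
  unfolding mnorm_inf_def by (intro Max_ge) auto

lemma mnorm_inf_nonneg[simp]: "0 \<le> mnorm_inf M"
  unfolding mnorm_inf_def by (intro Max_ge) auto

lemma mat_vec_comp: "i < dim_row M \<Longrightarrow> dim_vec v = dim_col M \<Longrightarrow> (M *\<^sub>v v) $ i = (\<Sum>j<dim_vec v. M $$ (i,j) * v $ j)"
  by (simp add: scalar_prod_def row_def atLeast0LessThan)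

definition opb :: "real mat \<Rightarrow> real \<Rightarrow> bool" where
  "opb M c \<longleftrightarrow> (\<forall>v. v \<in> carrier_vec (dim_col M) \<longrightarrow> vnorm2 (M *\<^sub>v v) \<le> c * vnorm2 v)"

lemma opbD: "opb M c \<Longrightarrow> v \<in> carrier_vec (dim_col M) \<Longrightarrow> vnorm2 (M *\<^sub>v v) \<le> c * vnorm2 v"
  unfolding opb_def by blast

lemma mat_vec_abs_bound:
  assumes "v \<in> carrier_vec (dim_col M)" "vnorm2 v \<le> 1"
  shows "vnorm2 (M *\<^sub>v v) \<le> (\<Sum>i<dim_row M. \<Sum>j<dim_col M. \<bar>M $$ (i,j)\<bar>)"
proof -
  have "vnorm2 (M *\<^sub>v v) \<le> (\<Sum>i<dim_row M. \<bar>(M *\<^sub>v v) $ i\<bar>)"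
    unfolding vnorm2_L2 dim_mult_mat_vec by (rule L2_set_le_sum_abs)
  also have "\<dots> \<le> (\<Sum>i<dim_row M. \<Sum>j<dim_col M. \<bar>M $$ (i,j)\<bar>)"
  proof (intro sum_mono)
    fix i assume i: "i \<in> {..<dim_row M}"
    have "\<bar>(M *\<^sub>v v) $ i\<bar> = \<bar>\<Sum>j<dim_col M. M $$ (i,j) * v $ j\<bar>"
      using i assms by (subst mat_vec_comp) auto
    also have "\<dots> \<le> (\<Sum>j<dim_col M. \<bar>M $$ (i,j) * v $ j\<bar>)" by (rule sum_abs)
    also have "\<dots> \<le> (\<Sum>j<dim_col M. \<bar>M $$ (i,j)\<bar>)"
    proof (intro sum_mono)
      fix j assume j: "j \<in> {..<dim_col M}"
      have "\<bar>v $ j\<bar> \<le> 1" using comp_le_vnorm2[of j v] j assms by auto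
      then show "\<bar>M $$ (i,j) * v $ j\<bar> \<le> \<bar>M $$ (i,j)\<bar>"
        by (simp add: abs_mult mult_left_le)
    qed
    finally show "\<bar>(M *\<^sub>v v) $ i\<bar> \<le> (\<Sum>j<dim_col M. \<bar>M $$ (i,j)\<bar>)" .
  qed
  finally show ?thesis .
qed

lemma mnorm2_opb: "opb M (mnorm2 M)"
  unfolding opb_def
proof (intro allI impI)
  fix v :: "real vec" assume v: "v \<in> carrier_vec (dim_col M)"
  define S where "S = {vnorm2 (M *\<^sub>v x) | x. x \<in> carrier_vec (dim_col M) \<and> vnorm2 x \<le> 1}"
  have bdd: "bdd_above S" unfolding S_def bdd_above_def
    using mat_vec_abs_bound by blast
  show "vnorm2 (M *\<^sub>v v) \<le> mnorm2 M * vnorm2 v"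
  proof (cases "vnorm2 v = 0")
    case True
    then have "v = 0\<^sub>v (dim_col M)" using vnorm2_zero[of v] v by auto
    moreover have "M *\<^sub>v 0\<^sub>v (dim_col M) = 0\<^sub>v (dim_row M)"
      by (intro eq_vecI) (auto simp: scalar_prod_def)
    ultimately show ?thesis using True by simp
  next
    case False
    define x where "x = (1 / vnorm2 v) \<cdot>\<^sub>v v"
    have pos: "vnorm2 v > 0" using False vnorm2_nonneg[of v] by linarith
    have xc: "x \<in> carrier_vec (dim_col M)" using v unfolding x_def by simp
    have xn: "vnorm2 x = 1" unfolding x_def vnorm2_smult using pos by simp
    have "M *\<^sub>v x = (1 / vnorm2 v) \<cdot>\<^sub>v (M *\<^sub>v v)" unfolding x_def
      using v by (intro mult_mat_vec) auto
    then have "vnorm2 (M *\<^sub>v x) = vnorm2 (M *\<^sub>v v) / vnorm2 v"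
      using pos by (simp add: vnorm2_smult)
    moreover have "vnorm2 (M *\<^sub>v x) \<in> S" unfolding S_def using xc xn by auto
    ultimately have "vnorm2 (M *\<^sub>v v) / vnorm2 v \<le> Sup S" using bdd
      by (metis cSup_upper)
    then show ?thesis unfolding mnorm2_def S_def[symmetric] using pos
      by (simp add: divide_le_eq mult.commute)
  qed
qed

lemma opb_mono: "opb M c \<Longrightarrow> c \<le> d \<Longrightarrow> opb M d"
  unfolding opb_def by (meson dual_order.trans mult_right_mono vnorm2_nonneg)

lemma mnorm2_le_opb: "mnorm2 M \<le> c \<Longrightarrow> opb M c"
  using opb_mono mnorm2_opb by blast

lemma mnorm_inf_opb:
  assumes M: "M \<in> carrier_mat r n" and ob: "opb M c" and c: "0 \<le> c"
  shows "mnorm_inf M \<le> sqrt n * c"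
  unfolding mnorm_inf_def
proof (intro Max.boundedI)
  show "finite (insert 0 {\<Sum>j<dim_col M. \<bar>M $$ (i, j)\<bar> |i. i < dim_row M})" by auto
  show "insert 0 {\<Sum>j<dim_col M. \<bar>M $$ (i, j)\<bar> |i. i < dim_row M} \<noteq> {}" by auto
  fix a assume "a \<in> insert 0 {\<Sum>j<dim_col M. \<bar>M $$ (i, j)\<bar> |i. i < dim_row M}"
  then consider "a = 0" | i where "i < dim_row M" "a = (\<Sum>j<dim_col M. \<bar>M $$ (i, j)\<bar>)" by auto
  then show "a \<le> sqrt n * c"
  proof cases
    case 1 then show ?thesis using c by simp
  next
    case 2
    define s where "s = vec n (\<lambda>j. sgn (M $$ (i,j)))"
    have sc: "s \<in> carrier_vec (dim_col M)" using M unfolding s_def by auto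
    have "(M *\<^sub>v s) $ i = (\<Sum>j<n. M $$ (i,j) * sgn (M $$ (i,j)))"
      using 2 M by (subst mat_vec_comp) (auto simp: s_def)
    also have "\<dots> = a" using 2 M by (auto intro!: sum.cong simp: abs_if sgn_if)
    finally have "a = (M *\<^sub>v s) $ i" by simp
    also have "\<dots> \<le> \<bar>(M *\<^sub>v s) $ i\<bar>" by simp
    also have "\<dots> \<le> vnorm2 (M *\<^sub>v s)" using 2 by (intro comp_le_vnorm2) simp
    also have "\<dots> \<le> c * vnorm2 s" using ob sc by (rule opbD)
    also have "\<dots> \<le> c * (sqrt n * 1)"
    proof (intro mult_left_mono c)
      have "vnorm2 s \<le> sqrt (dim_vec s) * 1"
        by (intro vnorm2_le_sqrt) (auto simp: s_def abs_sgn_eq)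
      then show "vnorm2 s \<le> sqrt n * 1" by (simp add: s_def)
    qed
    finally show ?thesis by (simp add: mult.commute)
  qed
qed

lemma vnorm_inf_mat_vec:
  assumes M: "M \<in> carrier_mat r c" and v: "v \<in> carrier_vec c"
  shows "vnorm_inf (M *\<^sub>v v) \<le> mnorm_inf M * vnorm_inf v"
proof (intro vnorm_inf_le)
  show "0 \<le> mnorm_inf M * vnorm_inf v" by simp
  fix i assume i: "i < dim_vec (M *\<^sub>v v)"
  then have i': "i < dim_row M" by simp
  have "\<bar>(M *\<^sub>v v) $ i\<bar> = \<bar>\<Sum>j<c. M $$ (i,j) * v $ j\<bar>"
    using i' M v by (subst mat_vec_comp) auto
  also have "\<dots> \<le> (\<Sum>j<c. \<bar>M $$ (i,j)\<bar> * vnorm_inf v)"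
    using v by (intro order.trans[OF sum_abs] sum_mono)
      (auto simp: abs_mult intro!: mult_left_mono comp_le_vnorm_inf)
  also have "\<dots> = (\<Sum>j<dim_col M. \<bar>M $$ (i,j)\<bar>) * vnorm_inf v"
    using M by (simp add: sum_distrib_right)
  also have "\<dots> \<le> mnorm_inf M * vnorm_inf v"
    using i' by (intro mult_right_mono rowsum_le_mnorm_inf) auto
  finally show "\<bar>(M *\<^sub>v v) $ i\<bar> \<le> mnorm_inf M * vnorm_inf v" .
qed

lemma ss_unpack:
  assumes "strongly_stable \<kappa> \<gamma> A B K" "A \<in> carrier_mat n n"
  obtains Q Qi L where "Q \<in> carrier_mat n n" "Qi \<in> carrier_mat n n" "L \<in> carrier_mat n n"
    "Q * Qi = 1\<^sub>m n" "Qi * Q = 1\<^sub>m n" "A - B * K = Qi * L * Q" "opb L (1 - \<gamma>)" "opb Q \<kappa>" "opb Qi \<kappa>" "opb K \<kappa>"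
proof -
  have d: "dim_row A = n" using assms(2) by simp
  obtain Q Qi L where h: "Q \<in> carrier_mat n n" "Qi \<in> carrier_mat n n" "L \<in> carrier_mat n n"
    "Q * Qi = 1\<^sub>m n" "Qi * Q = 1\<^sub>m n" "A - B * K = Qi * L * Q"
    "mnorm2 L \<le> 1 - \<gamma>" "mnorm2 Q \<le> \<kappa>" "mnorm2 Qi \<le> \<kappa>" "mnorm2 K \<le> \<kappa>"
    using assms(1) unfolding strongly_stable_def d by blast
  show ?thesis
    by (rule that[OF h(1-6) mnorm2_le_opb[OF h(7)] mnorm2_le_opb[OF h(8)] mnorm2_le_opb[OF h(9)] mnorm2_le_opb[OF h(10)]])
qed

lemma pow_mat_vec_carrier[simp]: "(A::real mat) \<in> carrier_mat n n \<Longrightarrow> v \<in> carrier_vec n \<Longrightarrow> A ^\<^sub>m j *\<^sub>v v \<in> carrier_vec n"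
  using mult_mat_vec_carrier pow_carrier_mat by blast

lemma amv: "(A::real mat) \<in> carrier_mat n n \<Longrightarrow> B \<in> carrier_mat n n \<Longrightarrow> v \<in> carrier_vec n \<Longrightarrow>
  (A * B) *\<^sub>v v = A *\<^sub>v (B *\<^sub>v v)"
  by (rule assoc_mult_mat_vec)

lemma QQi: assumes "(Q::real mat) \<in> carrier_mat n n" "Qi \<in> carrier_mat n n" "Q * Qi = 1\<^sub>m n" "y \<in> carrier_vec n"
  shows "Q *\<^sub>v (Qi *\<^sub>v y) = y"
proof -
  have "Q *\<^sub>v (Qi *\<^sub>v y) = (Q * Qi) *\<^sub>v y" using amv[OF assms(1,2,4)] by simp
  then show ?thesis using assms by simp
qed

lemma pow_L_bound:
  assumes L: "L \<in> carrier_mat n n" and ob: "opb L l" and v: "v \<in> carrier_vec n" and l: "0 \<le> l"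
  shows "vnorm2 (L ^\<^sub>m j *\<^sub>v v) \<le> l ^ j * vnorm2 v"
  using v
proof (induction j arbitrary: v)
  case 0
  then show ?case using L by simp
next
  case (Suc j)
  have "L ^\<^sub>m Suc j *\<^sub>v v = L ^\<^sub>m j *\<^sub>v (L *\<^sub>v v)" using amv[OF pow_carrier_mat[OF L] L Suc.prems] by simp
  also have "vnorm2 \<dots> \<le> l ^ j * vnorm2 (L *\<^sub>v v)" using Suc.IH[of "L *\<^sub>v v"] L Suc.prems by simp
  also have "\<dots> \<le> l ^ j * (l * vnorm2 v)"
    using opbD[OF ob, of v] Suc.prems L l by (intro mult_left_mono) auto
  finally show ?case by (simp add: mult_ac)
qed

context
  fixes F Q Qi L :: "real mat" and n :: nat and l \<kappa> :: real
  assumes Fd: "F = Qi * L * Q" and Q: "Q \<in> carrier_mat n n" and Qi: "Qi \<in> carrier_mat n n"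
    and L: "L \<in> carrier_mat n n" and QQ: "Q * Qi = 1\<^sub>m n" and QiQ: "Qi * Q = 1\<^sub>m n" and obL: "opb L l"
    and obQ: "opb Q \<kappa>" and obQi: "opb Qi \<kappa>" and k: "0 \<le> \<kappa>" and l: "0 \<le> l"
begin

lemma F_car: "F \<in> carrier_mat n n" using Fd Q Qi L by simp

lemma F_vec: "v \<in> carrier_vec n \<Longrightarrow> F *\<^sub>v v = Qi *\<^sub>v (L *\<^sub>v (Q *\<^sub>v v))"
  using Fd amv[OF mult_carrier_mat[OF Qi L] Q] amv[OF Qi L] Q by simp

lemma F_pow_vec: "v \<in> carrier_vec n \<Longrightarrow> F ^\<^sub>m j *\<^sub>v v = Qi *\<^sub>v (L ^\<^sub>m j *\<^sub>v (Q *\<^sub>v v))"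
proof (induction j arbitrary: v)
  case 0
  have "Qi *\<^sub>v (Q *\<^sub>v v) = v" using QQi[OF Qi Q QiQ 0] .
  then show ?case using F_car 0 L Q by simp
next
  case (Suc j)
  have "F ^\<^sub>m Suc j *\<^sub>v v = F ^\<^sub>m j *\<^sub>v (F *\<^sub>v v)" using amv[OF pow_carrier_mat[OF F_car] F_car Suc.prems] by simp
  also have "\<dots> = Qi *\<^sub>v (L ^\<^sub>m j *\<^sub>v (Q *\<^sub>v (F *\<^sub>v v)))" using Suc.IH F_car Suc.prems by simp
  also have "Q *\<^sub>v (F *\<^sub>v v) = L *\<^sub>v (Q *\<^sub>v v)" using F_vec[OF Suc.prems] QQi[OF Q Qi QQ] L Q Suc.prems by simp
  also have "L ^\<^sub>m j *\<^sub>v (L *\<^sub>v (Q *\<^sub>v v)) = L ^\<^sub>m Suc j *\<^sub>v (Q *\<^sub>v v)" using amv[OF pow_carrier_mat[OF L] L, of "Q *\<^sub>v v"] L Q Suc.prems by simp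
  finally show ?case .
qed

lemma QF_vec: "v \<in> carrier_vec n \<Longrightarrow> Q *\<^sub>v (F *\<^sub>v v) = L *\<^sub>v (Q *\<^sub>v v)"
  using F_vec QQi[OF Q Qi QQ] L Q by simp

lemma QF_norm: "v \<in> carrier_vec n \<Longrightarrow> vnorm2 (Q *\<^sub>v (F *\<^sub>v v)) \<le> l * vnorm2 (Q *\<^sub>v v)"
  using QF_vec opbD[OF obL] L Q by simp

lemma QFpow_norm: "v \<in> carrier_vec n \<Longrightarrow> vnorm2 (Q *\<^sub>v (F ^\<^sub>m j *\<^sub>v v)) \<le> l ^ j * (\<kappa> * vnorm2 v)"
proof -
  assume v: "v \<in> carrier_vec n"
  have "Q *\<^sub>v (F ^\<^sub>m j *\<^sub>v v) = L ^\<^sub>m j *\<^sub>v (Q *\<^sub>v v)"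
    using F_pow_vec[OF v] QQi[OF Q Qi QQ, of "L ^\<^sub>m j *\<^sub>v (Q *\<^sub>v v)"] L Q v by simp
  also have "vnorm2 \<dots> \<le> l ^ j * vnorm2 (Q *\<^sub>v v)" using pow_L_bound[OF L obL _ l] Q v by simp
  also have "\<dots> \<le> l ^ j * (\<kappa> * vnorm2 v)" using opbD[OF obQ, of v] Q v l by (intro mult_left_mono) auto
  finally show ?thesis .
qed

lemma Qi_norm: "y \<in> carrier_vec n \<Longrightarrow> vnorm2 (Qi *\<^sub>v y) \<le> \<kappa> * vnorm2 y"
  using opbD[OF obQi] Qi by simp

lemma norm_from_Q: "v \<in> carrier_vec n \<Longrightarrow> vnorm2 v \<le> \<kappa> * vnorm2 (Q *\<^sub>v v)"
proof -
  assume v: "v \<in> carrier_vec n"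
  have "v = Qi *\<^sub>v (Q *\<^sub>v v)" using QQi[OF Qi Q QiQ v] by simp
  then show ?thesis using Qi_norm[of "Q *\<^sub>v v"] Q v by simp
qed

lemma Fpow_norm: "v \<in> carrier_vec n \<Longrightarrow> vnorm2 (F ^\<^sub>m j *\<^sub>v v) \<le> \<kappa> * (l ^ j * (\<kappa> * vnorm2 v))"
proof -
  assume v: "v \<in> carrier_vec n"
  have "vnorm2 (F ^\<^sub>m j *\<^sub>v v) \<le> \<kappa> * vnorm2 (Q *\<^sub>v (F ^\<^sub>m j *\<^sub>v v))"
    using norm_from_Q[of "F ^\<^sub>m j *\<^sub>v v"] F_car v by simp
  also have "\<dots> \<le> \<kappa> * (l ^ j * (\<kappa> * vnorm2 v))" using QFpow_norm[OF v] k by (intro mult_left_mono)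
  finally show ?thesis .
qed

lemma F_norm: "v \<in> carrier_vec n \<Longrightarrow> vnorm2 (F *\<^sub>v v) \<le> \<kappa> * (l * (\<kappa> * vnorm2 v))"
  using Fpow_norm[of v 1] F_car by simp

lemma F_pow_Suc: "v \<in> carrier_vec n \<Longrightarrow> F ^\<^sub>m Suc j *\<^sub>v v = F *\<^sub>v (F ^\<^sub>m j *\<^sub>v v)"
proof (induction j arbitrary: v)
  case 0
  then show ?case using F_car by simp
next
  case (Suc j)
  have "F ^\<^sub>m Suc (Suc j) *\<^sub>v v = F ^\<^sub>m Suc j *\<^sub>v (F *\<^sub>v v)" using amv[OF pow_carrier_mat[OF F_car, of "Suc j"] F_car Suc.prems] by simp
  also have "\<dots> = F *\<^sub>v (F ^\<^sub>m j *\<^sub>v (F *\<^sub>v v))" using Suc.IH[of "F *\<^sub>v v"] F_car Suc.prems by (simp del: pow_mat.simps)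
  also have "F ^\<^sub>m j *\<^sub>v (F *\<^sub>v v) = F ^\<^sub>m Suc j *\<^sub>v v" using amv[OF pow_carrier_mat[OF F_car] F_car Suc.prems] by simp
  finally show ?case .
qed

end

lemma mat_vec_sum:
  assumes M: "M \<in> carrier_mat r c" and j: "j < r"
  shows "(M *\<^sub>v vec c (\<lambda>k. \<Sum>i\<in>I. g i k)) $ j = (\<Sum>i\<in>I. (M *\<^sub>v vec c (g i)) $ j)"
proof -
  have "(M *\<^sub>v vec c (\<lambda>k. \<Sum>i\<in>I. g i k)) $ j = (\<Sum>k<c. M $$ (j,k) * (\<Sum>i\<in>I. g i k))"
    using M j by (subst mat_vec_comp) auto
  also have "\<dots> = (\<Sum>i\<in>I. \<Sum>k<c. M $$ (j,k) * g i k)"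
    by (simp add: sum_distrib_left sum.swap[of _ I])
  also have "\<dots> = (\<Sum>i\<in>I. (M *\<^sub>v vec c (g i)) $ j)"
    using M j by (intro sum.cong refl) (subst mat_vec_comp, auto)
  finally show ?thesis .
qed

lemma mat_vec_uminus: "(B::real mat) \<in> carrier_mat r c \<Longrightarrow> y \<in> carrier_vec c \<Longrightarrow> B *\<^sub>v (- y) = - (B *\<^sub>v y)"
  by (intro eq_vecI) (auto simp: scalar_prod_def sum_negf)

definition Pv :: "real mat \<Rightarrow> nat \<Rightarrow> nat \<Rightarrow> (nat \<Rightarrow> real vec) \<Rightarrow> nat \<Rightarrow> real vec" where
  "Pv F n H w t = vec n (\<lambda>k. \<Sum>i<H. if i < t then (F ^\<^sub>m i *\<^sub>v w (t - Suc i)) $ k else 0)"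

lemma Pv_car[simp]: "Pv F n H w t \<in> carrier_vec n" unfolding Pv_def by simp

lemma dap_u_eq:
  assumes A: "A \<in> carrier_mat n n" and B: "B \<in> carrier_mat n m" and K: "K \<in> carrier_mat m n"
    and Kb: "Kb \<in> carrier_mat m n" and x: "x \<in> carrier_vec n" and w: "\<And>t. w t \<in> carrier_vec n"
  shows "dap_u Kb (M_of_K A B Kb K) H w t x = - (Kb *\<^sub>v x) + (Kb - K) *\<^sub>v Pv (A - B * K) n H w t"
proof (intro eq_vecI)
  have Fc: "A - B * K \<in> carrier_mat n n" using A B K by auto
  have KK: "Kb - K \<in> carrier_mat m n" using K Kb by auto
  fix j assume "j < dim_vec (- (Kb *\<^sub>v x) + (Kb - K) *\<^sub>v Pv (A - B * K) n H w t)"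
  then have j: "j < m" using K by simp
  have "((Kb - K) *\<^sub>v Pv (A - B * K) n H w t) $ j =
     (\<Sum>i<H. ((Kb - K) *\<^sub>v vec n (\<lambda>k. if i < t then ((A - B * K) ^\<^sub>m i *\<^sub>v w (t - Suc i)) $ k else 0)) $ j)"
    unfolding Pv_def by (rule mat_vec_sum[OF KK j])
  also have "\<dots> = (\<Sum>i<H. if i < t then ((Kb - K) *\<^sub>v ((A - B * K) ^\<^sub>m i *\<^sub>v w (t - Suc i))) $ j else 0)"
  proof (intro sum.cong refl)
    fix i
    show "((Kb - K) *\<^sub>v vec n (\<lambda>k. if i < t then ((A - B * K) ^\<^sub>m i *\<^sub>v w (t - Suc i)) $ k else 0)) $ j =
      (if i < t then ((Kb - K) *\<^sub>v ((A - B * K) ^\<^sub>m i *\<^sub>v w (t - Suc i))) $ j else 0)"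
    proof (cases "i < t")
      case True
      have "vec n (\<lambda>k. ((A - B * K) ^\<^sub>m i *\<^sub>v w (t - Suc i)) $ k) = (A - B * K) ^\<^sub>m i *\<^sub>v w (t - Suc i)"
        using Fc w by (intro eq_vecI) auto
      then show ?thesis using True by simp
    next
      case False
      then show ?thesis using Kb K j by (simp add: scalar_prod_def)
    qed
  qed
  also have "\<dots> = (\<Sum>i\<in>{1..H}. if i \<le> t then (M_of_K A B Kb K i *\<^sub>v w (t - i)) $ j else 0)"
  proof -
    have "(\<Sum>i\<in>{1..H}. if i \<le> t then (M_of_K A B Kb K i *\<^sub>v w (t - i)) $ j else 0)
       = (\<Sum>i<H. if Suc i \<le> t then (M_of_K A B Kb K (Suc i) *\<^sub>v w (t - Suc i)) $ j else 0)"
      unfolding One_nat_def by (rule sum.atLeast1_atMost_eq)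
    also have "\<dots> = (\<Sum>i<H. if i < t then ((Kb - K) *\<^sub>v ((A - B * K) ^\<^sub>m i *\<^sub>v w (t - Suc i))) $ j else 0)"
    proof (intro sum.cong refl)
      fix i
      have "M_of_K A B Kb K (Suc i) *\<^sub>v w (t - Suc i) = (Kb - K) *\<^sub>v ((A - B * K) ^\<^sub>m i *\<^sub>v w (t - Suc i))"
        unfolding M_of_K_def using KK Fc w by (simp only: diff_Suc_1) (rule assoc_mult_mat_vec, auto)
      then show "(if Suc i \<le> t then (M_of_K A B Kb K (Suc i) *\<^sub>v w (t - Suc i)) $ j else 0) =
        (if i < t then ((Kb - K) *\<^sub>v ((A - B * K) ^\<^sub>m i *\<^sub>v w (t - Suc i))) $ j else 0)" by simp
    qed
    finally show ?thesis by simp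
  qed
  finally have eq: "((Kb - K) *\<^sub>v Pv (A - B * K) n H w t) $ j =
     (\<Sum>i\<in>{1..H}. if i \<le> t then (M_of_K A B Kb K i *\<^sub>v w (t - i)) $ j else 0)" .
  show "dap_u Kb (M_of_K A B Kb K) H w t x $ j = (- (Kb *\<^sub>v x) + (Kb - K) *\<^sub>v Pv (A - B * K) n H w t) $ j"
    unfolding dap_u_def using j Kb K x eq by simp
qed (use Kb K in \<open>simp add: dap_u_def\<close>)

lemma mat_vec_zero: "(M::real mat) \<in> carrier_mat r c \<Longrightarrow> M *\<^sub>v 0\<^sub>v c = 0\<^sub>v r"
  by (intro eq_vecI) (auto simp: scalar_prod_def)

locale sysctx =
  fixes A B K Kb Q Qi L Gq Gqi Lg :: "real mat" and n m H :: nat and w :: "nat \<Rightarrow> real vec"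
    and \<kappa> \<gamma> wbar :: real
  assumes A: "A \<in> carrier_mat n n" and B: "B \<in> carrier_mat n m"
    and K: "K \<in> carrier_mat m n" and Kb: "Kb \<in> carrier_mat m n"
    and Q: "Q \<in> carrier_mat n n" and Qi: "Qi \<in> carrier_mat n n" and L: "L \<in> carrier_mat n n"
    and QQ: "Q * Qi = 1\<^sub>m n" and QiQ: "Qi * Q = 1\<^sub>m n" and Fd: "A - B * K = Qi * L * Q"
    and obL: "opb L (1 - \<gamma>)" and obQ: "opb Q \<kappa>" and obQi: "opb Qi \<kappa>" and obK: "opb K \<kappa>"
    and Gq: "Gq \<in> carrier_mat n n" and Gqi: "Gqi \<in> carrier_mat n n" and Lg: "Lg \<in> carrier_mat n n"
    and GG: "Gq * Gqi = 1\<^sub>m n" and GiG: "Gqi * Gq = 1\<^sub>m n" and Gd: "A - B * Kb = Gqi * Lg * Gq"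
    and obLg: "opb Lg (1 - \<gamma>)" and obGq: "opb Gq \<kappa>" and obGqi: "opb Gqi \<kappa>" and obKb: "opb Kb \<kappa>"
    and wc: "\<And>t. w t \<in> carrier_vec n" and wb: "\<And>t. vnorm_inf (w t) \<le> wbar"
    and g0: "0 < \<gamma>" and g1: "\<gamma> < 1" and k1: "1 \<le> \<kappa>" and H1: "1 \<le> H"
begin

abbreviation "F \<equiv> A - B * K"
abbreviation "G \<equiv> A - B * Kb"
abbreviation "lin t \<equiv> lin_state A B K w t"
abbreviation "dap t \<equiv> dap_state A B Kb (M_of_K A B Kb K) H w t"
abbreviation "P t \<equiv> Pv F n H w t"
abbreviation "P' t \<equiv> Pv F n (H - 1) w t"
abbreviation "cc t \<equiv> (if H - 1 < t then F ^\<^sub>m (H - 1) *\<^sub>v w (t - H) else 0\<^sub>v n)"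

lemma k0: "0 \<le> \<kappa>" using k1 by simp
lemma l0: "0 \<le> 1 - \<gamma>" using g1 by simp

lemma wdim[simp]: "dim_vec (w t) = n" using wc carrier_vecD by blast

lemma Fc: "F \<in> carrier_mat n n" using A B K by auto
lemma Gc: "G \<in> carrier_mat n n" using A B Kb by auto

lemmas FF = F_vec[OF Fd Q Qi L QQ QiQ obL obQ obQi k0 l0]
  QF_norm[OF Fd Q Qi L QQ QiQ obL obQ obQi k0 l0]
  QFpow_norm[OF Fd Q Qi L QQ QiQ obL obQ obQi k0 l0]
  norm_from_Q[OF Fd Q Qi L QQ QiQ obL obQ obQi k0 l0]
  F_norm[OF Fd Q Qi L QQ QiQ obL obQ obQi k0 l0]
  F_pow_Suc[OF Fd Q Qi L QQ QiQ obL obQ obQi k0 l0]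

lemmas GGl = QF_norm[OF Gd Gq Gqi Lg GG GiG obLg obGq obGqi k0 l0]
  norm_from_Q[OF Gd Gq Gqi Lg GG GiG obLg obGq obGqi k0 l0]

lemma Mx: "(M::real mat) \<in> carrier_mat n n \<Longrightarrow> x \<in> carrier_vec n \<Longrightarrow> M *\<^sub>v x \<in> carrier_vec n"
  by simp

lemma Fx: "x \<in> carrier_vec n \<Longrightarrow> F *\<^sub>v x = A *\<^sub>v x - B *\<^sub>v (K *\<^sub>v x)"
proof -
  assume x: "x \<in> carrier_vec n"
  have "F *\<^sub>v x = A *\<^sub>v x - (B * K) *\<^sub>v x"
    using A B K x by (intro minus_mult_distrib_mat_vec) auto
  also have "(B * K) *\<^sub>v x = B *\<^sub>v (K *\<^sub>v x)" using B K x by (intro assoc_mult_mat_vec) auto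
  finally show ?thesis .
qed

lemma Gx: "x \<in> carrier_vec n \<Longrightarrow> G *\<^sub>v x = A *\<^sub>v x - B *\<^sub>v (Kb *\<^sub>v x)"
proof -
  assume x: "x \<in> carrier_vec n"
  have "G *\<^sub>v x = A *\<^sub>v x - (B * Kb) *\<^sub>v x"
    using A B Kb x by (intro minus_mult_distrib_mat_vec) auto
  also have "(B * Kb) *\<^sub>v x = B *\<^sub>v (Kb *\<^sub>v x)" using B Kb x by (intro assoc_mult_mat_vec) auto
  finally show ?thesis .
qed

lemma lin_car: "lin t \<in> carrier_vec n"
proof (induction t)
  case 0 then show ?case using A by simp
next
  case (Suc t) then show ?case using A B K wc by simp
qed

lemma P_car: "P t \<in> carrier_vec n" by simp

lemma dap_car: "dap t \<in> carrier_vec n"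
proof (induction t)
  case 0 then show ?case using A by simp
next
  case (Suc t) then show ?case using A B K Kb wc by (simp add: dap_u_def)
qed

lemma lin_step: "lin (Suc t) = F *\<^sub>v lin t + w t"
proof -
  have x: "lin t \<in> carrier_vec n" by (rule lin_car)
  have "B *\<^sub>v (- (K *\<^sub>v lin t)) = - (B *\<^sub>v (K *\<^sub>v lin t))" using B K x by (intro mat_vec_uminus) auto
  then show ?thesis using Fx[OF x] A B K x wc by (intro eq_vecI) auto
qed

lemma dap_step: "dap (Suc t) = A *\<^sub>v dap t + B *\<^sub>v (- (Kb *\<^sub>v dap t) + (Kb - K) *\<^sub>v P t) + w t"
  using dap_u_eq[OF A B K Kb dap_car wc] by simp

lemma P_split: "P t = P' t + cc t"
proof (intro eq_vecI)
  fix k assume "k < dim_vec (P' t + cc t)"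
  then have k: "k < n" using B by (simp split: if_splits)
  obtain H' where H': "H = Suc H'" using H1 by (cases H) auto
  show "P t $ k = (P' t + cc t) $ k"
    using k wc Fc unfolding Pv_def H' by auto
qed (use B in simp)

lemma P_Suc: "P (Suc t) = w t + F *\<^sub>v P' t"
proof (intro eq_vecI)
  fix k assume "k < dim_vec (w t + F *\<^sub>v P' t)"
  then have k: "k < n" using Fc B by simp
  obtain H' where H': "H = Suc H'" using H1 by (cases H) auto
  have "(F *\<^sub>v P' t) $ k = (\<Sum>i<H'. (F *\<^sub>v vec n (\<lambda>j. if i < t then (F ^\<^sub>m i *\<^sub>v w (t - Suc i)) $ j else 0)) $ k)"
    unfolding Pv_def H' by (simp only: diff_Suc_1, rule mat_vec_sum[OF Fc k])
  also have "\<dots> = (\<Sum>i<H'. if i < t then (F ^\<^sub>m Suc i *\<^sub>v w (t - Suc i)) $ k else 0)"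
  proof (intro sum.cong refl)
    fix i
    show "(F *\<^sub>v vec n (\<lambda>j. if i < t then (F ^\<^sub>m i *\<^sub>v w (t - Suc i)) $ j else 0)) $ k =
      (if i < t then (F ^\<^sub>m Suc i *\<^sub>v w (t - Suc i)) $ k else 0)"
    proof (cases "i < t")
      case True
      have "vec n (\<lambda>j. (F ^\<^sub>m i *\<^sub>v w (t - Suc i)) $ j) = F ^\<^sub>m i *\<^sub>v w (t - Suc i)"
        using Fc wc by (intro eq_vecI) auto
      then show ?thesis using True FF(6)[OF wc, of i] by simp
    next
      case False
      then show ?thesis using A B K k by (simp add: scalar_prod_def)
    qed
  qed
  finally have eq: "(F *\<^sub>v P' t) $ k = (\<Sum>i<H'. if i < t then (F ^\<^sub>m Suc i *\<^sub>v w (t - Suc i)) $ k else 0)" .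
  have "P (Suc t) $ k = (\<Sum>i<Suc H'. if i < Suc t then (F ^\<^sub>m i *\<^sub>v w (Suc t - Suc i)) $ k else 0)"
    unfolding Pv_def H' using k by simp
  also have "\<dots> = w t $ k + (\<Sum>i<H'. if i < t then (F ^\<^sub>m Suc i *\<^sub>v w (t - Suc i)) $ k else 0)"
    unfolding sum.lessThan_Suc_shift using Fc wc A B K
    by (intro arg_cong2[where f="(+)"] sum.cong refl) auto
  finally show "P (Suc t) $ k = (w t + F *\<^sub>v P' t) $ k" using eq k A B K by simp
qed (use B in simp)


lemma cc_car: "cc t \<in> carrier_vec n" using pow_mat_vec_carrier[OF Fc wc] by simp

lemma Pv_dim[simp]: "dim_vec (Pv M n' H' w' t) = n'" unfolding Pv_def by simp
lemma lin_dim[simp]: "dim_vec (lin t) = n" using lin_car carrier_vecD by blast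
lemma dap_dim[simp]: "dim_vec (dap t) = n" using dap_car carrier_vecD by blast

lemma r_Suc: "lin (Suc t) - P (Suc t) = F *\<^sub>v (lin t - P t) + F *\<^sub>v cc t"
proof -
  have a: "lin t \<in> carrier_vec n" by (rule lin_car)
  have p': "P' t \<in> carrier_vec n" by simp
  have p: "P t \<in> carrier_vec n" by simp
  have c: "cc t \<in> carrier_vec n" by (rule cc_car)
  have "lin (Suc t) - P (Suc t) = F *\<^sub>v lin t - F *\<^sub>v P' t"
    unfolding lin_step P_Suc using Fc a p' by (intro eq_vecI) auto
  also have "\<dots> = F *\<^sub>v (lin t - P' t)" using Fc a p' by (intro mult_minus_distrib_mat_vec[symmetric])
  also have "lin t - P' t = (lin t - P t) + cc t"
    using P_split[of t] a p' c by (intro eq_vecI) auto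
  also have "F *\<^sub>v \<dots> = F *\<^sub>v (lin t - P t) + F *\<^sub>v cc t"
    using Fc a p c by (intro mult_add_distrib_mat_vec) auto
  finally show ?thesis .
qed

lemma wn: "vnorm2 (w t) \<le> sqrt n * wbar"
proof -
  have "vnorm2 (w t) \<le> sqrt (dim_vec (w t)) * wbar"
    by (intro vnorm2_le_sqrt order.trans[OF comp_le_vnorm_inf wb])
  then show ?thesis by simp
qed

abbreviation "Xb \<equiv> \<kappa> * (sqrt n * wbar) * (1 - \<gamma>) ^ H / \<gamma>"

lemma wbar0: "0 \<le> wbar" using wb[of 0] vnorm_inf_nonneg[of "w 0"] by linarith

lemma Xb0: "0 \<le> Xb" using k0 l0 g0 wbar0 by simp

lemma Xg: "\<gamma> * Xb = \<kappa> * (sqrt n * wbar) * (1 - \<gamma>) ^ H" using g0 by simp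
lemma Xg0: "0 \<le> \<kappa> * (sqrt n * wbar) * (1 - \<gamma>) ^ H" using k0 wbar0 l0 by simp

lemma Qr_bound: "vnorm2 (Q *\<^sub>v (lin t - P t)) \<le> Xb"
proof (induction t)
  case 0
  have "lin 0 - P 0 = 0\<^sub>v n" using A by (intro eq_vecI) (auto simp: Pv_def)
  then show ?case using mat_vec_zero[OF Q] Xb0 by simp
next
  case (Suc t)
  have a: "lin t \<in> carrier_vec n" by (rule lin_car)
  have r: "lin t - P t \<in> carrier_vec n" using a by simp
  have c: "cc t \<in> carrier_vec n" by (rule cc_car)
  have "Q *\<^sub>v (lin (Suc t) - P (Suc t)) = Q *\<^sub>v (F *\<^sub>v (lin t - P t)) + Q *\<^sub>v (F *\<^sub>v cc t)"
    unfolding r_Suc using Q Fc r c by (intro mult_add_distrib_mat_vec) auto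
  also have "vnorm2 \<dots> \<le> vnorm2 (Q *\<^sub>v (F *\<^sub>v (lin t - P t))) + vnorm2 (Q *\<^sub>v (F *\<^sub>v cc t))"
    using Q Fc by (intro vnorm2_add) auto
  also have "\<dots> \<le> (1 - \<gamma>) * Xb + \<gamma> * Xb"
  proof (intro add_mono)
    show "vnorm2 (Q *\<^sub>v (F *\<^sub>v (lin t - P t))) \<le> (1 - \<gamma>) * Xb"
      using FF(2)[OF r] mult_left_mono[OF Suc.IH l0] by linarith
    show "vnorm2 (Q *\<^sub>v (F *\<^sub>v cc t)) \<le> \<gamma> * Xb"
    proof (cases "H - 1 < t")
      case True
      have "F *\<^sub>v cc t = F ^\<^sub>m H *\<^sub>v w (t - H)"
        using True FF(6)[OF wc, of "H - 1" "t - H"] H1 by simp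
      moreover have "vnorm2 (Q *\<^sub>v (F ^\<^sub>m H *\<^sub>v w (t - H))) \<le> (1 - \<gamma>) ^ H * (\<kappa> * vnorm2 (w (t - H)))"
        by (rule FF(3)[OF wc])
      moreover have "(1 - \<gamma>) ^ H * (\<kappa> * vnorm2 (w (t - H))) \<le> (1 - \<gamma>) ^ H * (\<kappa> * (sqrt n * wbar))"
        using wn k0 l0 by (intro mult_left_mono) auto
      moreover have "\<gamma> * Xb = (1 - \<gamma>) ^ H * (\<kappa> * (sqrt n * wbar))" using g0 by simp
      ultimately show ?thesis by simp
    next
      case False
      then show ?thesis using mat_vec_zero[OF Fc] mat_vec_zero[OF Q] Xg Xg0 by simp
    qed
  qed
  also have "\<dots> = Xb"
  proof -
    have "\<forall>x::real. (1 - \<gamma>) * x + \<gamma> * x = x" by (simp add: algebra_simps)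
    then show ?thesis by blast
  qed
  finally show ?case .
qed

lemma r_bound: "vnorm2 (lin t - P t) \<le> \<kappa> * Xb"
proof -
  have "vnorm2 (lin t - P t) \<le> \<kappa> * vnorm2 (Q *\<^sub>v (lin t - P t))"
    using lin_car[of t] by (intro FF(4)) simp
  also have "\<dots> \<le> \<kappa> * Xb" using Qr_bound k0 by (intro mult_left_mono)
  finally show ?thesis .
qed

end

lemma vec_id1:
  fixes Aa Ad Ap Ka Kba Kbd Kbp Kp v :: "real vec"
  assumes "Aa \<in> carrier_vec n" "Ad \<in> carrier_vec n" "Ap \<in> carrier_vec n" "Ka \<in> carrier_vec n"
    "Kba \<in> carrier_vec n" "Kbd \<in> carrier_vec n" "Kbp \<in> carrier_vec n" "Kp \<in> carrier_vec n" "v \<in> carrier_vec n"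
  shows "(Aa + - Ka + v) - (Ad + (- Kbd + (Kbp - Kp)) + v)
     = (Aa - Kba - (Ad - Kbd)) + (Aa - Ka - (Ap - Kp)) - (Aa - Kba - (Ap - Kbp))"
  using assms by (intro eq_vecI) auto

context sysctx begin

lemma e_alg:
  assumes a: "a \<in> carrier_vec n" and d: "d \<in> carrier_vec n" and p: "p \<in> carrier_vec n"
    and v: "v \<in> carrier_vec n"
  shows "(A *\<^sub>v a + B *\<^sub>v (- (K *\<^sub>v a)) + v) - (A *\<^sub>v d + B *\<^sub>v (- (Kb *\<^sub>v d) + (Kb - K) *\<^sub>v p) + v)
    = G *\<^sub>v (a - d) + F *\<^sub>v (a - p) - G *\<^sub>v (a - p)"
proof -
  have e1: "G *\<^sub>v (a - d) = G *\<^sub>v a - G *\<^sub>v d" using Gc a d by (intro mult_minus_distrib_mat_vec)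
  have e2: "F *\<^sub>v (a - p) = F *\<^sub>v a - F *\<^sub>v p" using Fc a p by (intro mult_minus_distrib_mat_vec)
  have e3: "G *\<^sub>v (a - p) = G *\<^sub>v a - G *\<^sub>v p" using Gc a p by (intro mult_minus_distrib_mat_vec)
  have e4: "(Kb - K) *\<^sub>v p = Kb *\<^sub>v p - K *\<^sub>v p" using Kb K p by (intro minus_mult_distrib_mat_vec)
  have e5: "B *\<^sub>v (- (Kb *\<^sub>v d) + (Kb *\<^sub>v p - K *\<^sub>v p)) = B *\<^sub>v (- (Kb *\<^sub>v d)) + B *\<^sub>v (Kb *\<^sub>v p - K *\<^sub>v p)"
    using B Kb K d p by (intro mult_add_distrib_mat_vec) auto
  have e6: "B *\<^sub>v (Kb *\<^sub>v p - K *\<^sub>v p) = B *\<^sub>v (Kb *\<^sub>v p) - B *\<^sub>v (K *\<^sub>v p)"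
    using B Kb K p by (intro mult_minus_distrib_mat_vec) auto
  have e7: "B *\<^sub>v (- (Kb *\<^sub>v d)) = - (B *\<^sub>v (Kb *\<^sub>v d))" using B Kb d by (intro mat_vec_uminus) auto
  have e8: "B *\<^sub>v (- (K *\<^sub>v a)) = - (B *\<^sub>v (K *\<^sub>v a))" using B K a by (intro mat_vec_uminus) auto
  show ?thesis
    unfolding e1 e2 e3 e4 e5 e6 e7 e8 Fx[OF a] Fx[OF p] Gx[OF a] Gx[OF d] Gx[OF p]
    by (rule vec_id1[of _ n]) (use A B K Kb a d p v in simp_all)
qed

end

context sysctx begin

lemma e_Suc: "lin (Suc t) - dap (Suc t) = G *\<^sub>v (lin t - dap t) + F *\<^sub>v (lin t - P t) - G *\<^sub>v (lin t - P t)"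
proof -
  have "lin (Suc t) = A *\<^sub>v lin t + B *\<^sub>v (- (K *\<^sub>v lin t)) + w t" by (simp only: lin_state.simps)
  then show ?thesis unfolding dap_step
    using e_alg[OF lin_car[of t] dap_car[of t] Pv_car[of F n H w t] wc[of t]] by simp
qed

abbreviation "Yb \<equiv> 2 * \<kappa> ^ 3 * (\<kappa> * Xb) / \<gamma>"

lemma Ge_bound: "vnorm2 (Gq *\<^sub>v (lin t - dap t)) \<le> Yb"
proof (induction t)
  case 0
  have "lin 0 - dap 0 = 0\<^sub>v n" using A by (intro eq_vecI) auto
  moreover have "0 \<le> Yb"
  proof -
    have "0 \<le> \<kappa> * Xb" by (rule mult_nonneg_nonneg[OF k0 Xb0])
    then have "0 \<le> 2 * \<kappa> ^ 3 * (\<kappa> * Xb)" by (rule mult_nonneg_nonneg[rotated]) (simp add: k0)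
    then show ?thesis using g0 by (rule divide_nonneg_pos)
  qed
  ultimately show ?case using mat_vec_zero[OF Gq] by simp
next
  case (Suc t)
  define e where "e = lin t - dap t"
  define r where "r = lin t - P t"
  define R where "R = \<kappa> * Xb"
  have ec: "e \<in> carrier_vec n" unfolding e_def using lin_car dap_car by simp
  have rc: "r \<in> carrier_vec n" unfolding r_def using lin_car by simp
  have rb: "vnorm2 r \<le> R" unfolding r_def R_def by (rule r_bound)
  have R0: "0 \<le> R" unfolding R_def by (rule mult_nonneg_nonneg[OF k0 Xb0])
  have c1: "Gq *\<^sub>v (G *\<^sub>v e) \<in> carrier_vec n" using Gq Gc ec by simp
  have c2: "Gq *\<^sub>v (F *\<^sub>v r) \<in> carrier_vec n" using Gq Fc rc by simp
  have c3: "Gq *\<^sub>v (G *\<^sub>v r) \<in> carrier_vec n" using Gq Gc rc by simp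
  have "Gq *\<^sub>v (lin (Suc t) - dap (Suc t)) = Gq *\<^sub>v (G *\<^sub>v e) + Gq *\<^sub>v (F *\<^sub>v r) - Gq *\<^sub>v (G *\<^sub>v r)"
  proof -
    have "Gq *\<^sub>v (G *\<^sub>v e + F *\<^sub>v r - G *\<^sub>v r) = Gq *\<^sub>v (G *\<^sub>v e + F *\<^sub>v r) - Gq *\<^sub>v (G *\<^sub>v r)"
      using Gq Gc Fc ec rc by (intro mult_minus_distrib_mat_vec) auto
    also have "Gq *\<^sub>v (G *\<^sub>v e + F *\<^sub>v r) = Gq *\<^sub>v (G *\<^sub>v e) + Gq *\<^sub>v (F *\<^sub>v r)"
      using Gq Gc Fc ec rc by (intro mult_add_distrib_mat_vec) auto
    finally show ?thesis unfolding e_Suc e_def r_def .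
  qed
  also have "vnorm2 \<dots> \<le> vnorm2 (Gq *\<^sub>v (G *\<^sub>v e)) + vnorm2 (Gq *\<^sub>v (F *\<^sub>v r)) + vnorm2 (Gq *\<^sub>v (G *\<^sub>v r))"
  proof -
    have d1: "dim_vec (Gq *\<^sub>v (G *\<^sub>v e) + Gq *\<^sub>v (F *\<^sub>v r)) = dim_vec (Gq *\<^sub>v (G *\<^sub>v r))"
      using c1 c2 c3 by simp
    have d2: "dim_vec (Gq *\<^sub>v (G *\<^sub>v e)) = dim_vec (Gq *\<^sub>v (F *\<^sub>v r))" using c1 c2 by simp
    show ?thesis using vnorm2_diff[OF d1] vnorm2_add[OF d2] by linarith
  qed
  also have "\<dots> \<le> (1 - \<gamma>) * Yb + \<kappa> ^ 3 * R + \<kappa> ^ 3 * R"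
  proof (intro add_mono)
    show "vnorm2 (Gq *\<^sub>v (G *\<^sub>v e)) \<le> (1 - \<gamma>) * Yb"
      using GGl(1)[OF ec] mult_left_mono[OF Suc.IH l0] unfolding e_def by linarith
    have k3: "\<kappa> \<le> \<kappa> ^ 3"
    proof -
      have "1 \<le> \<kappa> ^ 2" using k1 by (simp add: one_le_power)
      then have "\<kappa> * 1 \<le> \<kappa> * \<kappa> ^ 2" using k0 by (rule mult_left_mono)
      then show ?thesis by (simp add: power3_eq_cube power2_eq_square)
    qed
    have g1': "1 - \<gamma> \<le> 1" using g0 by simp
    have Fr: "vnorm2 (F *\<^sub>v r) \<le> \<kappa> * (\<kappa> * R)"
    proof -
      have "vnorm2 (F *\<^sub>v r) \<le> \<kappa> * ((1 - \<gamma>) * (\<kappa> * vnorm2 r))" by (rule FF(5)[OF rc])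
      also have "(1 - \<gamma>) * (\<kappa> * vnorm2 r) \<le> 1 * (\<kappa> * R)"
        by (rule mult_mono[OF g1' mult_left_mono[OF rb k0]]) (use k0 R0 in simp_all)
      then have "\<kappa> * ((1 - \<gamma>) * (\<kappa> * vnorm2 r)) \<le> \<kappa> * (\<kappa> * R)" using k0 by (simp add: mult_left_mono)
      finally show ?thesis .
    qed
    have "vnorm2 (Gq *\<^sub>v (F *\<^sub>v r)) \<le> \<kappa> * vnorm2 (F *\<^sub>v r)" using opbD[OF obGq] Gq Fc rc by simp
    also have "\<dots> \<le> \<kappa> * (\<kappa> * (\<kappa> * R))" using Fr k0 by (rule mult_left_mono)
    also have "\<dots> = \<kappa> ^ 3 * R" by (simp add: power3_eq_cube)
    finally show "vnorm2 (Gq *\<^sub>v (F *\<^sub>v r)) \<le> \<kappa> ^ 3 * R" .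
    have "vnorm2 (Gq *\<^sub>v (G *\<^sub>v r)) \<le> (1 - \<gamma>) * vnorm2 (Gq *\<^sub>v r)" by (rule GGl(1)[OF rc])
    also have "vnorm2 (Gq *\<^sub>v r) \<le> \<kappa> * R"
      using opbD[OF obGq, of r] Gq rc mult_left_mono[OF rb k0] by simp
    then have "(1 - \<gamma>) * vnorm2 (Gq *\<^sub>v r) \<le> 1 * (\<kappa> * R)"
      by (rule mult_mono[OF g1']) (use k0 R0 in simp_all)
    also have "\<dots> \<le> \<kappa> ^ 3 * R" using k3 R0 by (simp add: mult_right_mono)
    finally show "vnorm2 (Gq *\<^sub>v (G *\<^sub>v r)) \<le> \<kappa> ^ 3 * R" .
  qed
  also have "\<dots> = Yb"
  proof -
    have yy: "\<gamma> * Yb = 2 * \<kappa> ^ 3 * R" unfolding R_def using g0 by simp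
    obtain y where y: "y = Yb" by simp
    have "\<gamma> * y = 2 * \<kappa> ^ 3 * R" using yy y by simp
    then have "(1 - \<gamma>) * y + \<kappa> ^ 3 * R + \<kappa> ^ 3 * R = y" by (simp add: algebra_simps)
    then show ?thesis using y by simp
  qed
  finally show ?case .
qed

end

lemma vec_id2:
  fixes Ka Kba Kbd Kbp Kp :: "real vec"
  assumes "Ka \<in> carrier_vec m" "Kba \<in> carrier_vec m" "Kbd \<in> carrier_vec m" "Kbp \<in> carrier_vec m" "Kp \<in> carrier_vec m"
  shows "- Ka - (- Kbd + (Kbp - Kp)) = - (Kba - Kbd) + (Kba - Kbp) - (Ka - Kp)"
  using assms by (intro eq_vecI) auto

lemma norm_chain: "opb M k \<Longrightarrow> x \<in> carrier_vec (dim_col M) \<Longrightarrow> vnorm2 x \<le> b \<Longrightarrow> 0 \<le> k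
  \<Longrightarrow> vnorm2 (M *\<^sub>v x) \<le> k * b"
  by (meson opbD mult_left_mono order.trans)

context sysctx begin

lemma e_bound: "vnorm2 (lin t - dap t) \<le> \<kappa> * Yb"
proof -
  have "vnorm2 (lin t - dap t) \<le> \<kappa> * vnorm2 (Gq *\<^sub>v (lin t - dap t))"
    using lin_car[of t] dap_car[of t] by (intro GGl(2)) simp
  also have "\<dots> \<le> \<kappa> * Yb" using Ge_bound k0 by (intro mult_left_mono)
  finally show ?thesis .
qed

lemma u_bound: "vnorm2 (lin_input A B K w t - dap_input A B Kb (M_of_K A B Kb K) H w t)
   \<le> \<kappa> * (\<kappa> * Yb) + \<kappa> * (\<kappa> * Xb) + \<kappa> * (\<kappa> * Xb)"
proof -
  define a where "a = lin t"
  define d where "d = dap t"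
  define p where "p = P t"
  have a: "a \<in> carrier_vec n" unfolding a_def by (rule lin_car)
  have d: "d \<in> carrier_vec n" unfolding d_def by (rule dap_car)
  have p: "p \<in> carrier_vec n" unfolding p_def by simp
  have eq: "lin_input A B K w t - dap_input A B Kb (M_of_K A B Kb K) H w t
     = - (Kb *\<^sub>v (a - d)) + Kb *\<^sub>v (a - p) - K *\<^sub>v (a - p)"
  proof -
    have e1: "Kb *\<^sub>v (a - d) = Kb *\<^sub>v a - Kb *\<^sub>v d" using Kb a d by (intro mult_minus_distrib_mat_vec)
    have e2: "Kb *\<^sub>v (a - p) = Kb *\<^sub>v a - Kb *\<^sub>v p" using Kb a p by (intro mult_minus_distrib_mat_vec)
    have e3: "K *\<^sub>v (a - p) = K *\<^sub>v a - K *\<^sub>v p" using K a p by (intro mult_minus_distrib_mat_vec)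
    have e4: "(Kb - K) *\<^sub>v p = Kb *\<^sub>v p - K *\<^sub>v p" using Kb K p by (intro minus_mult_distrib_mat_vec)
    show ?thesis
      unfolding lin_input_def dap_input_def a_def[symmetric] d_def[symmetric]
      unfolding dap_u_eq[OF A B K Kb d wc] p_def[symmetric] e1 e2 e3 e4
      by (rule vec_id2[of _ m]) (use K Kb a d p in simp_all)
  qed
  have "vnorm2 (- (Kb *\<^sub>v (a - d)) + Kb *\<^sub>v (a - p) - K *\<^sub>v (a - p))
      \<le> vnorm2 (Kb *\<^sub>v (a - d)) + vnorm2 (Kb *\<^sub>v (a - p)) + vnorm2 (K *\<^sub>v (a - p))"
  proof -
    have d1: "dim_vec (- (Kb *\<^sub>v (a - d)) + Kb *\<^sub>v (a - p)) = dim_vec (K *\<^sub>v (a - p))" using K Kb by simp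
    have d2: "dim_vec (- (Kb *\<^sub>v (a - d))) = dim_vec (Kb *\<^sub>v (a - p))" by simp
    show ?thesis using vnorm2_diff[OF d1] vnorm2_add[OF d2] by simp
  qed
  also have "\<dots> \<le> \<kappa> * (\<kappa> * Yb) + \<kappa> * (\<kappa> * Xb) + \<kappa> * (\<kappa> * Xb)"
  proof (intro add_mono)
    show "vnorm2 (Kb *\<^sub>v (a - d)) \<le> \<kappa> * (\<kappa> * Yb)"
      by (rule norm_chain[OF obKb _ _ k0]) (use Kb a d e_bound[of t] in \<open>simp_all add: a_def d_def\<close>)
    show "vnorm2 (Kb *\<^sub>v (a - p)) \<le> \<kappa> * (\<kappa> * Xb)"
      by (rule norm_chain[OF obKb _ _ k0]) (use Kb a p r_bound[of t] in \<open>simp_all add: a_def p_def\<close>)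
    show "vnorm2 (K *\<^sub>v (a - p)) \<le> \<kappa> * (\<kappa> * Xb)"
      by (rule norm_chain[OF obK _ _ k0]) (use K a p r_bound[of t] in \<open>simp_all add: a_def p_def\<close>)
  qed
  finally show ?thesis unfolding eq .
qed



end

lemma pm: "0 \<le> (a::real) \<Longrightarrow> a \<le> P \<Longrightarrow> 0 \<le> x \<Longrightarrow> x \<le> y \<Longrightarrow> a ^ k * x \<le> P ^ k * y"
  by (intro mult_mono power_mono) auto

lemma arith_bounds:
  fixes \<gamma> \<kappa> wbar Dxn Dun ex eu :: real and n H :: nat
  assumes g0: "0 < \<gamma>" and g1: "\<gamma> < 1" and k1: "1 \<le> \<kappa>" and wbar0: "0 \<le> wbar"
    and D1: "0 \<le> Dxn" and D2: "0 \<le> Dun"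
    and ex: "ex \<le> Dxn * (\<kappa> * (2 * \<kappa> ^ 3 * (\<kappa> * (\<kappa> * (sqrt n * wbar) * (1 - \<gamma>) ^ H / \<gamma>)) / \<gamma>))"
    and eu: "eu \<le> Dun * (\<kappa> * (\<kappa> * (2 * \<kappa> ^ 3 * (\<kappa> * (\<kappa> * (sqrt n * wbar) * (1 - \<gamma>) ^ H / \<gamma>)) / \<gamma>))
         + \<kappa> * (\<kappa> * (\<kappa> * (sqrt n * wbar) * (1 - \<gamma>) ^ H / \<gamma>))
         + \<kappa> * (\<kappa> * (\<kappa> * (sqrt n * wbar) * (1 - \<gamma>) ^ H / \<gamma>)))"
  shows "max ex eu \<le> 4 * (1 + Dxn + Dun + \<kappa> + 1 / \<gamma> + wbar) ^ 11 * sqrt n * (1 - \<gamma>) ^ H"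
proof -
  define Pp where "Pp = 1 + Dxn + Dun + \<kappa> + 1 / \<gamma> + wbar"
  define s where "s = sqrt n * (1 - \<gamma>) ^ H"
  define ig where "ig = 1 / \<gamma>"
  have k0: "0 \<le> \<kappa>" using k1 by simp
  have ig0: "0 \<le> ig" using g0 unfolding ig_def by simp
  have Pp1: "1 \<le> Pp" unfolding Pp_def using ig0 wbar0 k0 D1 D2 ig_def by simp
  have PDx: "Dxn \<le> Pp" and PDu: "Dun \<le> Pp" and Pk: "\<kappa> \<le> Pp"
    and Pig: "ig \<le> Pp" and Pw: "wbar \<le> Pp"
    unfolding Pp_def ig_def using ig0 wbar0 k0 D1 D2 ig_def by auto
  have s0: "0 \<le> s" unfolding s_def using g1 by simp
  have P0: "0 \<le> Pp" using Pp1 by simp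
  have eqY: "\<kappa> * (2 * \<kappa> ^ 3 * (\<kappa> * (\<kappa> * (sqrt n * wbar) * (1 - \<gamma>) ^ H / \<gamma>)) / \<gamma>)
     = 2 * (\<kappa> ^ 6 * (wbar * ig ^ 2)) * s"
    unfolding s_def ig_def using g0 by (simp add: field_simps power2_eq_square eval_nat_numeral)
  have eqX: "\<kappa> * (\<kappa> * (\<kappa> * (sqrt n * wbar) * (1 - \<gamma>) ^ H / \<gamma>)) = \<kappa> ^ 3 * (wbar * ig ^ 1) * s"
    unfolding s_def ig_def using g0 by (simp add: field_simps power3_eq_cube)
  have b1: "ex \<le> 4 * Pp ^ 11 * s"
  proof -
    have "ex \<le> 2 * (Dxn ^ 1 * (\<kappa> ^ 6 * (wbar ^ 1 * (ig ^ 2 * 1)))) * s"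
      using ex unfolding eqY by (simp add: mult_ac)
    also have "\<dots> \<le> 2 * (Pp ^ 1 * (Pp ^ 6 * (Pp ^ 1 * (Pp ^ 2 * 1)))) * s"
      using s0 ig0 wbar0 k0 PDx Pk Pw Pig P0 D1
      by (intro mult_right_mono mult_left_mono pm) (auto intro!: mult_nonneg_nonneg)
    also have "\<dots> = 2 * Pp ^ 10 * s" by (simp add: eval_nat_numeral algebra_simps)
    also have "\<dots> \<le> 4 * Pp ^ 11 * s"
    proof -
      have "Pp ^ 10 \<le> Pp ^ 11" using Pp1 by (intro power_increasing) auto
      moreover have "0 \<le> Pp ^ 11" using P0 by simp
      ultimately have "2 * Pp ^ 10 \<le> 4 * Pp ^ 11" by linarith
      then show ?thesis using s0 by (intro mult_right_mono) auto
    qed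
    finally show ?thesis .
  qed
  have b2: "eu \<le> 4 * Pp ^ 11 * s"
  proof -
    have "eu \<le> Dun * (\<kappa> * (2 * (\<kappa> ^ 6 * (wbar * ig ^ 2)) * s) + \<kappa> ^ 3 * (wbar * ig ^ 1) * s + \<kappa> ^ 3 * (wbar * ig ^ 1) * s)"
      using eu unfolding eqY eqX by (simp add: mult.assoc)
    also have "\<dots> = 2 * (Dun ^ 1 * (\<kappa> ^ 7 * (wbar ^ 1 * (ig ^ 2 * 1)))) * s
        + 2 * (Dun ^ 1 * (\<kappa> ^ 3 * (wbar ^ 1 * (ig ^ 1 * 1)))) * s"
      by (simp add: algebra_simps eval_nat_numeral)
    also have "\<dots> \<le> 2 * (Pp ^ 1 * (Pp ^ 7 * (Pp ^ 1 * (Pp ^ 2 * 1)))) * s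
        + 2 * (Pp ^ 1 * (Pp ^ 3 * (Pp ^ 1 * (Pp ^ 1 * 1)))) * s"
      using s0 ig0 wbar0 k0 PDu Pk Pw Pig P0 D2
      by (intro add_mono mult_right_mono mult_left_mono pm) (auto intro!: mult_nonneg_nonneg)
    also have "\<dots> = 2 * Pp ^ 11 * s + 2 * Pp ^ 6 * s" by (simp add: eval_nat_numeral algebra_simps)
    also have "\<dots> \<le> 4 * Pp ^ 11 * s"
    proof -
      have "Pp ^ 6 \<le> Pp ^ 11" using Pp1 by (intro power_increasing) auto
      then have "2 * Pp ^ 6 * s \<le> 2 * Pp ^ 11 * s" using s0 by (intro mult_right_mono) auto
      then show ?thesis by linarith
    qed
    finally show ?thesis .
  qed
  show ?thesis using b1 b2 unfolding Pp_def s_def by (simp add: mult.assoc)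
qed

lemma loose_aux:
  assumes M: "(M::real mat) \<in> carrier_mat k c" and a: "a \<in> carrier_vec c" and b: "b \<in> carrier_vec c"
    and le: "vec_le (M *\<^sub>v a) d" and eps: "vnorm_inf (M *\<^sub>v (a - b)) \<le> \<epsilon>"
  shows "vec_le (M *\<^sub>v b) (vec_shift d \<epsilon>)"
proof -
  have eq: "M *\<^sub>v (a - b) = M *\<^sub>v a - M *\<^sub>v b" using M a b by (intro mult_minus_distrib_mat_vec)
  have dd: "dim_vec d = k" using le M unfolding vec_le_def by simp
  show ?thesis unfolding vec_le_def vec_shift_def
  proof (intro conjI allI impI)
    show "dim_vec (M *\<^sub>v b) = dim_vec (vec (dim_vec d) (\<lambda>i. d $ i + \<epsilon>))" using M dd by simp
    fix i assume "i < dim_vec (M *\<^sub>v b)"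
    then have i: "i < k" using M by simp
    have "(M *\<^sub>v a) $ i \<le> d $ i" using le i M unfolding vec_le_def by simp
    moreover have "\<bar>(M *\<^sub>v (a - b)) $ i\<bar> \<le> \<epsilon>"
      using comp_le_vnorm_inf[of i "M *\<^sub>v (a - b)"] i M eps by simp
    moreover have "(M *\<^sub>v (a - b)) $ i = (M *\<^sub>v a) $ i - (M *\<^sub>v b) $ i" unfolding eq using i M by simp
    ultimately show "(M *\<^sub>v b) $ i \<le> vec (dim_vec d) (\<lambda>i. d $ i + \<epsilon>) $ i" using i dd by simp
  qed
qed

theorem lemma4:
  shows "\<exists>C > (0::real). \<exists>N::nat.
    \<forall>(n::nat) (m::nat) (kx::nat) (ku::nat) (T::nat) (H::nat)
      A B Dx dx Du du Kb K (\<kappa>::real) (\<gamma>::real) (wbar::real).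
      A \<in> carrier_mat n n \<and> B \<in> carrier_mat n m
      \<and> Dx \<in> carrier_mat kx n \<and> dx \<in> carrier_vec kx
      \<and> Du \<in> carrier_mat ku m \<and> du \<in> carrier_vec ku
      \<and> Kb \<in> carrier_mat m n \<and> K \<in> carrier_mat m n
      \<and> 0 < \<gamma> \<and> \<gamma> < 1 \<and> 1 \<le> \<kappa> \<and> 0 < wbar \<and> 1 \<le> H
      \<and> strongly_stable \<kappa> \<gamma> A B Kb
      \<and> strongly_stable \<kappa> \<gamma> A B K \<and> lin_safe T wbar Dx dx Du du A B K
      \<longrightarrow>
      (let c3 = C * (1 + mnorm_inf Dx + mnorm_inf Du + \<kappa> + 1 / \<gamma> + wbar) ^ N;
           \<epsilon>3 = c3 * sqrt (real n) * (1 - \<gamma>) ^ H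
       in in_M n m \<kappa> \<gamma> H (M_of_K A B Kb K)
        \<and> (\<forall>w. admissible_dist n wbar w \<longrightarrow> (\<forall>t.
             max (vnorm_inf (Dx *\<^sub>v (lin_state A B K w t - dap_state A B Kb (M_of_K A B Kb K) H w t)))
                 (vnorm_inf (Du *\<^sub>v (lin_input A B K w t - dap_input A B Kb (M_of_K A B Kb K) H w t)))
             \<le> \<epsilon>3))
        \<and> dap_loosely_safe \<epsilon>3 T wbar Dx dx Du du A B Kb (M_of_K A B Kb K) H)"
proof (rule exI[of _ 4], rule conjI, simp, rule exI[of _ 11], intro allI impI)
  fix n m kx ku T H :: nat and A B Dx Du Kb K :: "real mat" and dx du :: "real vec" and \<kappa> \<gamma> wbar :: real
  assume as: "A \<in> carrier_mat n n \<and> B \<in> carrier_mat n m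
      \<and> Dx \<in> carrier_mat kx n \<and> dx \<in> carrier_vec kx
      \<and> Du \<in> carrier_mat ku m \<and> du \<in> carrier_vec ku
      \<and> Kb \<in> carrier_mat m n \<and> K \<in> carrier_mat m n
      \<and> 0 < \<gamma> \<and> \<gamma> < 1 \<and> 1 \<le> \<kappa> \<and> 0 < wbar \<and> 1 \<le> H
      \<and> strongly_stable \<kappa> \<gamma> A B Kb
      \<and> strongly_stable \<kappa> \<gamma> A B K \<and> lin_safe T wbar Dx dx Du du A B K"
  then have A: "A \<in> carrier_mat n n" and B: "B \<in> carrier_mat n m"
    and Dx: "Dx \<in> carrier_mat kx n" and Du: "Du \<in> carrier_mat ku m"
    and Kb: "Kb \<in> carrier_mat m n" and K: "K \<in> carrier_mat m n"
    and g0: "0 < \<gamma>" and g1: "\<gamma> < 1" and k1: "1 \<le> \<kappa>" and wb0: "0 < wbar" and H1: "1 \<le> H"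
    and ssb: "strongly_stable \<kappa> \<gamma> A B Kb" and ss: "strongly_stable \<kappa> \<gamma> A B K"
    and safe: "lin_safe T wbar Dx dx Du du A B K" by blast+
  have k0: "0 \<le> \<kappa>" and l0: "0 \<le> 1 - \<gamma>" using k1 g1 by auto
  obtain Q Qi L where Q: "Q \<in> carrier_mat n n" and Qi: "Qi \<in> carrier_mat n n" and L: "L \<in> carrier_mat n n"
    and QQ: "Q * Qi = 1\<^sub>m n" and QiQ: "Qi * Q = 1\<^sub>m n" and Fd: "A - B * K = Qi * L * Q"
    and obL: "opb L (1 - \<gamma>)" and obQ: "opb Q \<kappa>" and obQi: "opb Qi \<kappa>" and obK: "opb K \<kappa>"
    by (rule ss_unpack[OF ss A])
  obtain Gq Gqi Lg where Gq: "Gq \<in> carrier_mat n n" and Gqi: "Gqi \<in> carrier_mat n n" and Lg: "Lg \<in> carrier_mat n n"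
    and GG: "Gq * Gqi = 1\<^sub>m n" and GiG: "Gqi * Gq = 1\<^sub>m n" and Gd: "A - B * Kb = Gqi * Lg * Gq"
    and obLg: "opb Lg (1 - \<gamma>)" and obGq: "opb Gq \<kappa>" and obGqi: "opb Gqi \<kappa>" and obKb: "opb Kb \<kappa>"
    by (rule ss_unpack[OF ssb A])
  have Fc: "A - B * K \<in> carrier_mat n n" by (rule minus_carrier_mat[OF mult_carrier_mat[OF B K]])
  define \<epsilon>3 where "\<epsilon>3 = 4 * (1 + mnorm_inf Dx + mnorm_inf Du + \<kappa> + 1 / \<gamma> + wbar) ^ 11 * sqrt (real n) * (1 - \<gamma>) ^ H"
  have inM: "in_M n m \<kappa> \<gamma> H (M_of_K A B Kb K)"
    unfolding in_M_def
  proof (intro ballI conjI)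
    fix i assume "i \<in> {1..H}"
    define j where "j = i - 1"
    have Mc: "M_of_K A B Kb K i \<in> carrier_mat m n" unfolding M_of_K_def
      by (rule mult_carrier_mat[OF minus_carrier_mat[OF K] pow_carrier_mat[OF Fc]])
    then show "M_of_K A B Kb K i \<in> carrier_mat m n" .
    have ob: "opb (M_of_K A B Kb K i) (2 * \<kappa> ^ 3 * (1 - \<gamma>) ^ j)"
      unfolding opb_def
    proof (intro allI impI)
      fix v :: "real vec" assume "v \<in> carrier_vec (dim_col (M_of_K A B Kb K i))"
      then have v: "v \<in> carrier_vec n" using Mc by simp
      define y where "y = (A - B * K) ^\<^sub>m j *\<^sub>v v"
      have y: "y \<in> carrier_vec n" unfolding y_def using Fc v by simp
      have "M_of_K A B Kb K i *\<^sub>v v = (Kb - K) *\<^sub>v y"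
        unfolding M_of_K_def y_def j_def using Kb K Fc v by (intro assoc_mult_mat_vec) auto
      also have "\<dots> = Kb *\<^sub>v y - K *\<^sub>v y" using Kb K y by (intro minus_mult_distrib_mat_vec)
      finally have eqM: "M_of_K A B Kb K i *\<^sub>v v = Kb *\<^sub>v y - K *\<^sub>v y" .
      have dd: "dim_vec (Kb *\<^sub>v y) = dim_vec (K *\<^sub>v y)" using Kb K by simp
      have n1: "vnorm2 (M_of_K A B Kb K i *\<^sub>v v) \<le> vnorm2 (Kb *\<^sub>v y) + vnorm2 (K *\<^sub>v y)"
        unfolding eqM by (rule vnorm2_diff[OF dd])
      have n2: "vnorm2 (Kb *\<^sub>v y) \<le> \<kappa> * vnorm2 y" using opbD[OF obKb, of y] Kb y by simp
      have n3: "vnorm2 (K *\<^sub>v y) \<le> \<kappa> * vnorm2 y" using opbD[OF obK, of y] K y by simp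
      have n4: "vnorm2 y \<le> \<kappa> * ((1 - \<gamma>) ^ j * (\<kappa> * vnorm2 v))"
        unfolding y_def by (rule Fpow_norm[OF Fd Q Qi L QQ QiQ obL obQ obQi k0 l0 v])
      have n5: "\<kappa> * vnorm2 y \<le> \<kappa> * (\<kappa> * ((1 - \<gamma>) ^ j * (\<kappa> * vnorm2 v)))"
        using n4 k0 by (rule mult_left_mono)
      have n6: "\<kappa> * (\<kappa> * ((1 - \<gamma>) ^ j * (\<kappa> * vnorm2 v))) = \<kappa> ^ 3 * (1 - \<gamma>) ^ j * vnorm2 v"
        by (simp add: power3_eq_cube mult_ac)
      show "vnorm2 (M_of_K A B Kb K i *\<^sub>v v) \<le> 2 * \<kappa> ^ 3 * (1 - \<gamma>) ^ j * vnorm2 v"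
        using n1 n2 n3 n5 n6 by linarith
    qed
    have "mnorm_inf (M_of_K A B Kb K i) \<le> sqrt n * (2 * \<kappa> ^ 3 * (1 - \<gamma>) ^ j)"
      using Mc ob k0 l0 by (intro mnorm_inf_opb) auto
    then show "mnorm_inf (M_of_K A B Kb K i) \<le> 2 * sqrt n * \<kappa> ^ 3 * (1 - \<gamma>) ^ (i - 1)"
      unfolding j_def by (simp add: mult_ac)
  qed
  have bnd: "max (vnorm_inf (Dx *\<^sub>v (lin_state A B K w t - dap_state A B Kb (M_of_K A B Kb K) H w t)))
                 (vnorm_inf (Du *\<^sub>v (lin_input A B K w t - dap_input A B Kb (M_of_K A B Kb K) H w t)))
             \<le> \<epsilon>3" if adm: "admissible_dist n wbar w" for w t
  proof -
    have wc: "\<And>t. w t \<in> carrier_vec n" and wb: "\<And>t. vnorm_inf (w t) \<le> wbar"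
      using adm unfolding admissible_dist_def by auto
    have S: "sysctx A B K Kb Q Qi L Gq Gqi Lg n m H w \<kappa> \<gamma> wbar"
      by (rule sysctx.intro[OF A B K Kb Q Qi L QQ QiQ Fd obL obQ obQi obK Gq Gqi Lg GG GiG Gd obLg obGq obGqi obKb wc wb g0 g1 k1 H1])
    have lc: "lin_state A B K w t \<in> carrier_vec n" by (rule sysctx.lin_car[OF S])
    have dc: "dap_state A B Kb (M_of_K A B Kb K) H w t \<in> carrier_vec n" by (rule sysctx.dap_car[OF S])
    have uc: "lin_input A B K w t - dap_input A B Kb (M_of_K A B Kb K) H w t \<in> carrier_vec m"
      unfolding lin_input_def dap_input_def dap_u_def using K Kb lc by auto
    show ?thesis unfolding \<epsilon>3_def
    proof (rule arith_bounds[OF g0 g1 k1 less_imp_le[OF wb0] mnorm_inf_nonneg mnorm_inf_nonneg])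
      show "vnorm_inf (Dx *\<^sub>v (lin_state A B K w t - dap_state A B Kb (M_of_K A B Kb K) H w t))
        \<le> mnorm_inf Dx * (\<kappa> * (2 * \<kappa> ^ 3 * (\<kappa> * (\<kappa> * (sqrt n * wbar) * (1 - \<gamma>) ^ H / \<gamma>)) / \<gamma>))"
        using vnorm_inf_mat_vec[OF Dx, of "lin_state A B K w t - dap_state A B Kb (M_of_K A B Kb K) H w t"]
          vnorm_inf_le_vnorm2[of "lin_state A B K w t - dap_state A B Kb (M_of_K A B Kb K) H w t"]
          sysctx.e_bound[OF S, of t] lc dc
        by (meson minus_carrier_vec mnorm_inf_nonneg mult_left_mono order.trans)
      show "vnorm_inf (Du *\<^sub>v (lin_input A B K w t - dap_input A B Kb (M_of_K A B Kb K) H w t))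
        \<le> mnorm_inf Du * (\<kappa> * (\<kappa> * (2 * \<kappa> ^ 3 * (\<kappa> * (\<kappa> * (sqrt n * wbar) * (1 - \<gamma>) ^ H / \<gamma>)) / \<gamma>))
         + \<kappa> * (\<kappa> * (\<kappa> * (sqrt n * wbar) * (1 - \<gamma>) ^ H / \<gamma>))
         + \<kappa> * (\<kappa> * (\<kappa> * (sqrt n * wbar) * (1 - \<gamma>) ^ H / \<gamma>)))"
        using vnorm_inf_mat_vec[OF Du uc]
          vnorm_inf_le_vnorm2[of "lin_input A B K w t - dap_input A B Kb (M_of_K A B Kb K) H w t"]
          sysctx.u_bound[OF S, of t]
        by (meson mnorm_inf_nonneg mult_left_mono order.trans)
    qed
  qed
  have ls: "dap_loosely_safe \<epsilon>3 T wbar Dx dx Du du A B Kb (M_of_K A B Kb K) H"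
    unfolding dap_loosely_safe_def
  proof (intro allI impI conjI)
    fix w t assume adm: "admissible_dist (dim_row A) wbar w" and tT: "t \<le> T"
    then have adm': "admissible_dist n wbar w" using A by simp
    have wc: "\<And>t. w t \<in> carrier_vec n" and wb: "\<And>t. vnorm_inf (w t) \<le> wbar"
      using adm' unfolding admissible_dist_def by auto
    have S: "sysctx A B K Kb Q Qi L Gq Gqi Lg n m H w \<kappa> \<gamma> wbar"
      by (rule sysctx.intro[OF A B K Kb Q Qi L QQ QiQ Fd obL obQ obQi obK Gq Gqi Lg GG GiG Gd obLg obGq obGqi obKb wc wb g0 g1 k1 H1])
    have lc: "lin_state A B K w t \<in> carrier_vec n" by (rule sysctx.lin_car[OF S])
    have dc: "dap_state A B Kb (M_of_K A B Kb K) H w t \<in> carrier_vec n" by (rule sysctx.dap_car[OF S])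
    have luc: "lin_input A B K w t \<in> carrier_vec m" unfolding lin_input_def using K lc by simp
    have duc: "dap_input A B Kb (M_of_K A B Kb K) H w t \<in> carrier_vec m"
      unfolding dap_input_def dap_u_def using Kb by simp
    have s: "vec_le (Dx *\<^sub>v lin_state A B K w t) dx \<and> vec_le (Du *\<^sub>v lin_input A B K w t) du"
      using safe adm tT unfolding lin_safe_def by blast
    have b: "max (vnorm_inf (Dx *\<^sub>v (lin_state A B K w t - dap_state A B Kb (M_of_K A B Kb K) H w t)))
                 (vnorm_inf (Du *\<^sub>v (lin_input A B K w t - dap_input A B Kb (M_of_K A B Kb K) H w t)))
             \<le> \<epsilon>3" by (rule bnd[OF adm'])
    show "vec_le (Dx *\<^sub>v dap_state A B Kb (M_of_K A B Kb K) H w t) (vec_shift dx \<epsilon>3)"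
      using s b by (intro loose_aux[OF Dx lc dc]) auto
    show "vec_le (Du *\<^sub>v dap_input A B Kb (M_of_K A B Kb K) H w t) (vec_shift du \<epsilon>3)"
      using s b by (intro loose_aux[OF Du luc duc]) auto
  qed
  show "let c3 = 4 * (1 + mnorm_inf Dx + mnorm_inf Du + \<kappa> + 1 / \<gamma> + wbar) ^ 11;
           \<epsilon>3 = c3 * sqrt (real n) * (1 - \<gamma>) ^ H
       in in_M n m \<kappa> \<gamma> H (M_of_K A B Kb K)
        \<and> (\<forall>w. admissible_dist n wbar w \<longrightarrow> (\<forall>t.
             max (vnorm_inf (Dx *\<^sub>v (lin_state A B K w t - dap_state A B Kb (M_of_K A B Kb K) H w t)))
                 (vnorm_inf (Du *\<^sub>v (lin_input A B K w t - dap_input A B Kb (M_of_K A B Kb K) H w t)))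
             \<le> \<epsilon>3))
        \<and> dap_loosely_safe \<epsilon>3 T wbar Dx dx Du du A B Kb (M_of_K A B Kb K) H"
    unfolding Let_def \<epsilon>3_def[symmetric] using inM bnd ls by blast
qed

end
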